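(* Let $\mathcal{S}$ be a state space and let $\mathsf{M}^{(1)},\mathsf{M}^{(2)}$ be dichotomic measurements on $\mathcal{S}$ with outcomes $\{+,-\}$. Then $\bar P(\mathsf{M}^{(1)},\mathsf{M}^{(2)})=1$ if and only if there exist four states $s_1,s_2,s_3,s_4\in\mathcal{S}$ such that $\mathsf{M}^{(1)}$ discriminates $\{s_1,s_2\}$ and $\{s_3,s_4\}$ and $\mathsf{M}^{(2)}$ discriminates $\{s_1,s_4\}$ and $\{s_2,s_3\}$.
   Context: General probabilistic theory setting: a state space $\mathcal{S}$ is a compact convex subset of a finite-dimensional real vector space, embedded as a base of a closed generating proper cone in a vector space $V$, with unit effect $u$. Effects are linear functionals $e$ on $V$ with $0\le e\le1$ on $\mathcal{S}$; $\|f\|=\max_{s\in\mathcal{S}}|f(s)|$. A dichotomic measurement is a pair of effects $\mathsf{M}_+,\mathsf{M}_-$ with $\mathsf{M}_++\mathsf{M}_-=u$. For dichotomic $\mathsf{M}^{(1)},\mathsf{M}^{(2)}$, $\bar P(\mathsf{M}^{(1)},\mathsf{M}^{(2)})=\frac18\sum_{x,y\in\{+,-\}}\|\mathsf{M}^{(1)}_x+\mathsf{M}^{(2)}_y\|$. A dichotomic measurement $\mathsf{M}$ discriminates sets of states $S_+,S_-\subseteq\mathcal{S}$ if $\mathsf{M}_+(s)=1$ for all $s\in S_+$ and $\mathsf{M}_+(s)=0$ for all $s\in S_-$. *)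

theory Defs
  imports "HOL-Analysis.Analysis"
begin

text \<open>A state space: a nonempty compact convex set S in a finite-dimensional real
vector space V (type 'a), which is a base of the cone it generates: there is a linear
functional u (the unit effect) equal to 1 on S, and S spans V (generating cone).
Closedness and properness of the generated cone follow from compactness and u = 1 on S.\<close>
definition state_space :: "'a::euclidean_space set \<Rightarrow> ('a \<Rightarrow> real) \<Rightarrow> bool" where
  "state_space S u \<longleftrightarrow> compact S \<and> convex S \<and> S \<noteq> {} \<and> linear u \<and>
     (\<forall>s\<in>S. u s = 1) \<and> span S = UNIV"

definition is_effect :: "'a::euclidean_space set \<Rightarrow> ('a \<Rightarrow> real) \<Rightarrow> bool" where
  "is_effect S e \<longleftrightarrow> linear e \<and> (\<forall>s\<in>S. 0 \<le> e s \<and> e s \<le> 1)"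

definition dichotomic :: "'a::euclidean_space set \<Rightarrow> ('a \<Rightarrow> real) \<Rightarrow> ('a \<Rightarrow> real) \<Rightarrow> ('a \<Rightarrow> real) \<Rightarrow> bool" where
  "dichotomic S u Mp Mm \<longleftrightarrow> is_effect S Mp \<and> is_effect S Mm \<and> (\<forall>v. Mp v + Mm v = u v)"

text \<open>\<parallel>f\<parallel> = max over S of |f s| (the max is attained since S is compact).\<close>
definition gpt_norm :: "'a set \<Rightarrow> ('a \<Rightarrow> real) \<Rightarrow> real" where
  "gpt_norm S f = (SUP s\<in>S. \<bar>f s\<bar>)"

definition Pbar :: "'a set \<Rightarrow> ('a \<Rightarrow> real) \<times> ('a \<Rightarrow> real) \<Rightarrow> ('a \<Rightarrow> real) \<times> ('a \<Rightarrow> real) \<Rightarrow> real" where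
  "Pbar S M1 M2 = (1/8) *
     (gpt_norm S (\<lambda>v. fst M1 v + fst M2 v) + gpt_norm S (\<lambda>v. fst M1 v + snd M2 v) +
      gpt_norm S (\<lambda>v. snd M1 v + fst M2 v) + gpt_norm S (\<lambda>v. snd M1 v + snd M2 v))"

definition discriminates :: "('a \<Rightarrow> real) \<times> ('a \<Rightarrow> real) \<Rightarrow> 'a set \<Rightarrow> 'a set \<Rightarrow> bool" where
  "discriminates M Sp Sm \<longleftrightarrow> (\<forall>s\<in>Sp. fst M s = 1) \<and> (\<forall>s\<in>Sm. fst M s = 0)"

end

theory Submission
  imports Defs
begin

lemma gn_le: "S \<noteq> {} \<Longrightarrow> \<forall>s\<in>S. \<bar>f s\<bar> \<le> 2 \<Longrightarrow> gpt_norm S f \<le> 2"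
  unfolding gpt_norm_def by (rule cSUP_least) auto

lemma gn_ge: "s \<in> S \<Longrightarrow> \<forall>s\<in>S. \<bar>f s\<bar> \<le> (2::real) \<Longrightarrow> \<bar>f s\<bar> \<le> gpt_norm S f"
  unfolding gpt_norm_def by (rule cSUP_upper) (auto intro!: bdd_aboveI2)

lemma gn_attain:
  fixes f :: "'a::euclidean_space \<Rightarrow> real"
  assumes "compact S" "S \<noteq> {}" "linear f"
  shows "\<exists>s\<in>S. gpt_norm S f = \<bar>f s\<bar>"
proof -
  have "continuous_on S (\<lambda>s. \<bar>f s\<bar>)"
    using assms(3) by (intro continuous_intros linear_continuous_on) (simp add: linear_conv_bounded_linear)
  then have "compact ((\<lambda>s. \<bar>f s\<bar>) ` S)" using assms(1) by (rule compact_continuous_image)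
  then obtain y where y: "y \<in> (\<lambda>s. \<bar>f s\<bar>) ` S" "\<forall>x\<in>(\<lambda>s. \<bar>f s\<bar>) ` S. x \<le> y"
    using compact_attains_sup assms(2) by (metis image_is_empty)
  then obtain s where "s \<in> S" "y = \<bar>f s\<bar>" by auto
  moreover have "gpt_norm S f = y" unfolding gpt_norm_def using y by (intro cSup_eq_maximum) auto
  ultimately show ?thesis by auto
qed

lemma key:
  fixes f g :: "'a::euclidean_space \<Rightarrow> real"
  assumes "compact S" "S \<noteq> {}" "linear f" "linear g"
    and "\<forall>s\<in>S. 0 \<le> f s \<and> f s \<le> 1" "\<forall>s\<in>S. 0 \<le> g s \<and> g s \<le> 1"
  shows "gpt_norm S (\<lambda>v. f v + g v) \<le> 2"
    and "gpt_norm S (\<lambda>v. f v + g v) = 2 \<longleftrightarrow> (\<exists>s\<in>S. f s = 1 \<and> g s = 1)"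
proof -
  have b: "\<forall>s\<in>S. \<bar>f s + g s\<bar> \<le> 2" using assms(5,6) by force
  show le: "gpt_norm S (\<lambda>v. f v + g v) \<le> 2" using gn_le[OF assms(2)] b by auto
  have lin: "linear (\<lambda>v. f v + g v)" using assms(3,4) by (rule linear_compose_add)
  show "gpt_norm S (\<lambda>v. f v + g v) = 2 \<longleftrightarrow> (\<exists>s\<in>S. f s = 1 \<and> g s = 1)"
  proof
    assume "gpt_norm S (\<lambda>v. f v + g v) = 2"
    with gn_attain[OF assms(1,2) lin] obtain s where "s \<in> S" "\<bar>f s + g s\<bar> = 2" by auto
    then show "\<exists>s\<in>S. f s = 1 \<and> g s = 1" using assms(5,6) by force
  next
    assume "\<exists>s\<in>S. f s = 1 \<and> g s = 1"
    then obtain s where "s \<in> S" "f s = 1" "g s = 1" by auto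
    with gn_ge[of s S "\<lambda>v. f v + g v"] b le show "gpt_norm S (\<lambda>v. f v + g v) = 2" by auto
  qed
qed

theorem proposition6:
  fixes S :: "'a::euclidean_space set" and u :: "'a \<Rightarrow> real"
    and M1p M1m M2p M2m :: "'a \<Rightarrow> real"
  assumes "state_space S u"
    and "dichotomic S u M1p M1m"
    and "dichotomic S u M2p M2m"
  shows "Pbar S (M1p, M1m) (M2p, M2m) = 1 \<longleftrightarrow>
    (\<exists>s1\<in>S. \<exists>s2\<in>S. \<exists>s3\<in>S. \<exists>s4\<in>S.
       discriminates (M1p, M1m) {s1, s2} {s3, s4} \<and>
       discriminates (M2p, M2m) {s1, s4} {s2, s3})"
proof -
  have S: "compact S" "S \<noteq> {}" and u1: "\<forall>s\<in>S. u s = 1"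
    using assms(1) unfolding state_space_def by auto
  have e: "linear M1p" "\<forall>s\<in>S. 0 \<le> M1p s \<and> M1p s \<le> 1"
          "linear M1m" "\<forall>s\<in>S. 0 \<le> M1m s \<and> M1m s \<le> 1"
          "linear M2p" "\<forall>s\<in>S. 0 \<le> M2p s \<and> M2p s \<le> 1"
          "linear M2m" "\<forall>s\<in>S. 0 \<le> M2m s \<and> M2m s \<le> 1"
    using assms(2,3) unfolding dichotomic_def is_effect_def by auto
  have c1: "\<forall>s\<in>S. M1m s = 1 - M1p s" and c2: "\<forall>s\<in>S. M2m s = 1 - M2p s"
    using assms(2,3) u1 unfolding dichotomic_def by (metis add_diff_cancel_left')+
  note k1 = key[OF S e(1) e(5) e(2) e(6)]
  note k2 = key[OF S e(1) e(7) e(2) e(8)]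
  note k3 = key[OF S e(3) e(5) e(4) e(6)]
  note k4 = key[OF S e(3) e(7) e(4) e(8)]
  have "Pbar S (M1p, M1m) (M2p, M2m) = 1 \<longleftrightarrow>
     (gpt_norm S (\<lambda>v. M1p v + M2p v) = 2 \<and> gpt_norm S (\<lambda>v. M1p v + M2m v) = 2 \<and>
      gpt_norm S (\<lambda>v. M1m v + M2p v) = 2 \<and> gpt_norm S (\<lambda>v. M1m v + M2m v) = 2)"
    unfolding Pbar_def using k1(1) k2(1) k3(1) k4(1) by auto
  also have "\<dots> \<longleftrightarrow> (\<exists>s\<in>S. M1p s = 1 \<and> M2p s = 1) \<and> (\<exists>s\<in>S. M1p s = 1 \<and> M2m s = 1) \<and>
      (\<exists>s\<in>S. M1m s = 1 \<and> M2p s = 1) \<and> (\<exists>s\<in>S. M1m s = 1 \<and> M2m s = 1)"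
    using k1(2) k2(2) k3(2) k4(2) by simp
  also have "\<dots> \<longleftrightarrow> (\<exists>s\<in>S. M1p s = 1 \<and> M2p s = 1) \<and> (\<exists>s\<in>S. M1p s = 1 \<and> M2p s = 0) \<and>
      (\<exists>s\<in>S. M1p s = 0 \<and> M2p s = 1) \<and> (\<exists>s\<in>S. M1p s = 0 \<and> M2p s = 0)"
    using c1 c2 by (smt (verit, best))
  also have "\<dots> \<longleftrightarrow> (\<exists>s1\<in>S. \<exists>s2\<in>S. \<exists>s3\<in>S. \<exists>s4\<in>S.
       discriminates (M1p, M1m) {s1, s2} {s3, s4} \<and>
       discriminates (M2p, M2m) {s1, s4} {s2, s3})"
    unfolding discriminates_def by auto
  finally show ?thesis .
qed

end
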